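(* Let $G$ be a cycle and $H=(T,L)$ a demand digraph with $T\subseteq V$. If every arc of the directed version of $G$ is contained in at most two routes, then $(G,H)$ has the uniqueness property.
   Context: A supply graph is a finite undirected graph $G=(V,E)$; its directed version (arc set $A$) replaces each edge by two opposite arcs. A demand digraph is a simple digraph $H=(T,L)$ with $T\subseteq V$, arcs called OD-pairs. For $(o,d)\in L$ an $(o,d)$-route is a directed $(o,d)$-path in the directed version of $G$. The population is a bounded real interval $I$ with Lebesgue measure $\lambda$, partitioned into measurable $I_{(o,d)}$. A strategy profile is a measurable $\sigma:I\to\{\text{routes}\}$ with $\sigma(i)$ an $(o,d)$-route for $i\in I_{(o,d)}$; flow $f_a=\lambda\{i:a\in\sigma(i)\}$. Each user $i$ has nonnegative continuous strictly increasing cost functions $c_a^i:\mathbb R_+\to\mathbb R_+$ with $i\mapsto c^i_a(x)$ measurable; route cost is $\sum_{a\in r}c_a^i(f_a)$. An equilibrium is a strategy profile where each user's route has minimal cost among the routes of his OD-pair. $(G,H)$ has the uniqueness property if for every measurable partition $(I_{(o,d)})_{(o,d)\in L}$ of $I$ and every assignment of such cost functions, the flow on each arc is the same in all equilibria. *)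

theory Defs
  imports "HOL-Analysis.Analysis"
begin

definition is_cycle :: "'v set \<Rightarrow> 'v set set \<Rightarrow> bool" where
  "is_cycle V E \<longleftrightarrow>
     (\<exists>vs. distinct vs \<and> length vs \<ge> 3 \<and> set vs = V \<and>
        E = {{vs ! k, vs ! ((k + 1) mod length vs)} | k. k < length vs})"

definition arcs_of :: "'v set set \<Rightarrow> ('v \<times> 'v) set" where
  "arcs_of E = {(u, v). {u, v} \<in> E \<and> u \<noteq> v}"

definition demand_digraph :: "'v set \<Rightarrow> 'v set \<Rightarrow> ('v \<times> 'v) set \<Rightarrow> bool" where
  "demand_digraph V T L \<longleftrightarrow> T \<subseteq> V \<and> L \<subseteq> T \<times> T \<and> (\<forall>(o', d) \<in> L. o' \<noteq> d)"

text \<open>A directed path is represented by its vertex sequence; its arcs are the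
  consecutive pairs.\<close>
definition path_arcs :: "'v list \<Rightarrow> ('v \<times> 'v) set" where
  "path_arcs p = set (zip p (tl p))"

definition is_route :: "'v set set \<Rightarrow> 'v \<Rightarrow> 'v \<Rightarrow> 'v list \<Rightarrow> bool" where
  "is_route E o' d p \<longleftrightarrow>
     p \<noteq> [] \<and> distinct p \<and> hd p = o' \<and> last p = d \<and> path_arcs p \<subseteq> arcs_of E"

definition all_routes :: "'v set set \<Rightarrow> ('v \<times> 'v) set \<Rightarrow> 'v list set" where
  "all_routes E L = {p. \<exists>(o', d) \<in> L. is_route E o' d p}"

definition population :: "real set \<Rightarrow> bool" where
  "population I \<longleftrightarrow> is_interval I \<and> bounded I"

definition od_partition :: "real set \<Rightarrow> ('v \<times> 'v) set \<Rightarrow> ('v \<times> 'v \<Rightarrow> real set) \<Rightarrow> bool" where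
  "od_partition I L P \<longleftrightarrow>
     (\<forall>od \<in> L. P od \<in> sets lebesgue) \<and>
     (\<forall>od \<in> L. \<forall>od' \<in> L. od \<noteq> od' \<longrightarrow> P od \<inter> P od' = {}) \<and>
     (\<Union>od \<in> L. P od) = I"

text \<open>Strategy profile: measurable (w.r.t. the discrete sigma-algebra on the
  finite set of routes) assignment of an (o,d)-route to every user of I_(o,d).\<close>
definition strategy_profile ::
  "'v set set \<Rightarrow> ('v \<times> 'v) set \<Rightarrow> real set \<Rightarrow> ('v \<times> 'v \<Rightarrow> real set) \<Rightarrow> (real \<Rightarrow> 'v list) \<Rightarrow> bool" where
  "strategy_profile E L I P \<sigma> \<longleftrightarrow>
     (\<forall>r. {i \<in> I. \<sigma> i = r} \<in> sets lebesgue) \<and>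
     (\<forall>(o', d) \<in> L. \<forall>i \<in> P (o', d). is_route E o' d (\<sigma> i))"

definition flow :: "real set \<Rightarrow> (real \<Rightarrow> 'v list) \<Rightarrow> 'v \<times> 'v \<Rightarrow> real" where
  "flow I \<sigma> a = measure lebesgue {i \<in> I. a \<in> path_arcs (\<sigma> i)}"

definition admissible_costs ::
  "'v set set \<Rightarrow> real set \<Rightarrow> (real \<Rightarrow> 'v \<times> 'v \<Rightarrow> real \<Rightarrow> real) \<Rightarrow> bool" where
  "admissible_costs E I c \<longleftrightarrow>
     (\<forall>i \<in> I. \<forall>a \<in> arcs_of E.
        (\<forall>x \<ge> 0. c i a x \<ge> 0) \<and> continuous_on {0..} (c i a) \<and> strict_mono_on {0..} (c i a)) \<and>
     (\<forall>a \<in> arcs_of E. \<forall>x \<ge> 0. (\<lambda>i. c i a x) \<in> borel_measurable (restrict_space lebesgue I))"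

definition route_cost ::
  "(real \<Rightarrow> 'v \<times> 'v \<Rightarrow> real \<Rightarrow> real) \<Rightarrow> real set \<Rightarrow> (real \<Rightarrow> 'v list) \<Rightarrow> real \<Rightarrow> 'v list \<Rightarrow> real" where
  "route_cost c I \<sigma> i r = (\<Sum>a \<in> path_arcs r. c i a (flow I \<sigma> a))"

definition equilibrium ::
  "'v set set \<Rightarrow> ('v \<times> 'v) set \<Rightarrow> real set \<Rightarrow> ('v \<times> 'v \<Rightarrow> real set) \<Rightarrow>
   (real \<Rightarrow> 'v \<times> 'v \<Rightarrow> real \<Rightarrow> real) \<Rightarrow> (real \<Rightarrow> 'v list) \<Rightarrow> bool" where
  "equilibrium E L I P c \<sigma> \<longleftrightarrow>
     strategy_profile E L I P \<sigma> \<and>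
     (\<forall>(o', d) \<in> L. \<forall>i \<in> P (o', d). \<forall>r. is_route E o' d r \<longrightarrow>
        route_cost c I \<sigma> i (\<sigma> i) \<le> route_cost c I \<sigma> i r)"

definition uniqueness_property ::
  "'v set set \<Rightarrow> ('v \<times> 'v) set \<Rightarrow> real set \<Rightarrow> bool" where
  "uniqueness_property E L I \<longleftrightarrow>
     (\<forall>P c \<sigma>1 \<sigma>2. od_partition I L P \<longrightarrow> admissible_costs E I c \<longrightarrow>
        equilibrium E L I P c \<sigma>1 \<longrightarrow> equilibrium E L I P c \<sigma>2 \<longrightarrow>
        (\<forall>a \<in> arcs_of E. flow I \<sigma>1 a = flow I \<sigma>2 a))"

end

theory Submission
  imports Defs
begin


lemma arcs_sym: "(u,v) \<in> arcs_of E \<Longrightarrow> (v,u) \<in> arcs_of E"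
  by (auto simp: arcs_of_def insert_commute)

lemma mod_pred_aux:
  fixes k j n :: nat
  assumes "k < n" "(k + 1) mod n = j"
  shows "k = (j + n - 1) mod n"
proof (cases "k + 1 < n")
  case True then show ?thesis using assms by auto
next
  case False then have "k + 1 = n" using assms by auto
  then show ?thesis using assms by auto
qed

lemma cycle_nbrs:
  assumes "is_cycle V E"
  shows "\<exists>x y. \<forall>v. (u,v) \<in> arcs_of E \<longrightarrow> v = x \<or> v = y"
proof -
  obtain vs where vs: "distinct vs" "length vs \<ge> 3" "set vs = V"
    "E = {{vs ! k, vs ! ((k + 1) mod length vs)} | k. k < length vs}"
    using assms unfolding is_cycle_def by blast
  define n where "n = length vs"
  have n: "n \<ge> 3" using vs n_def by simp
  show ?thesis
  proof (cases "u \<in> set vs")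
    case True
    then obtain j where j: "j < n" "vs ! j = u" by (auto simp: in_set_conv_nth n_def)
    show ?thesis
    proof (intro exI allI impI)
      fix v assume "(u, v) \<in> arcs_of E"
      then obtain k where k: "k < n" "{u, v} = {vs ! k, vs ! ((k + 1) mod n)}"
        using vs(4) by (auto simp: arcs_of_def n_def)
      have km: "(k + 1) mod n < n" using n by simp
      from k(2) have "(u = vs ! k \<and> v = vs ! ((k + 1) mod n)) \<or> (u = vs ! ((k + 1) mod n) \<and> v = vs ! k)"
        by (auto simp: doubleton_eq_iff)
      then show "v = vs ! ((j + 1) mod n) \<or> v = vs ! ((j + n - 1) mod n)"
      proof
        assume h: "u = vs ! k \<and> v = vs ! ((k + 1) mod n)"
        then have "k = j" using j k vs(1) nth_eq_iff_index_eq n_def by metis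
        then show ?thesis using h by simp
      next
        assume h: "u = vs ! ((k + 1) mod n) \<and> v = vs ! k"
        then have "(k + 1) mod n = j" using j km vs(1) nth_eq_iff_index_eq n_def by metis
        then have "k = (j + n - 1) mod n" using mod_pred_aux k(1) by blast
        then show ?thesis using h by simp
      qed
    qed
  next
    case False
    have "\<not> (u, v) \<in> arcs_of E" for v
    proof
      assume "(u, v) \<in> arcs_of E"
      then obtain k where k: "k < length vs" "{u, v} = {vs ! k, vs ! ((k + 1) mod length vs)}"
        using vs(4) by (auto simp: arcs_of_def)
      have "(k + 1) mod length vs < length vs" by (rule mod_less_divisor) (use vs(2) in auto)
      then have "u \<in> set vs" using k by (auto simp: doubleton_eq_iff)
      then show False using False by simp
    qed
    then show ?thesis by blast
  qed
qed

lemma path_arcs_Cons2: "path_arcs (x#y#p) = insert (x,y) (path_arcs (y#p))"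
  by (simp add: path_arcs_def)

lemma path_unique:
  assumes nb: "\<And>u. \<exists>a b. \<forall>v. (u,v)\<in>A \<longrightarrow> v=a \<or> v=b"
    and sym: "\<And>u v. (u,v)\<in>A \<Longrightarrow> (v,u)\<in>A"
  shows "distinct (x#y#p) \<Longrightarrow> distinct (x#y#q) \<Longrightarrow> path_arcs (x#y#p) \<subseteq> A \<Longrightarrow>
    path_arcs (x#y#q) \<subseteq> A \<Longrightarrow> last (y#p) = last (y#q) \<Longrightarrow> p = q"
proof (induction p arbitrary: x y q)
  case Nil
  show ?case
  proof (rule ccontr)
    assume "[] \<noteq> q"
    then have "last (y#q) \<in> set q" by simp
    then show False using Nil.prems by auto
  qed
next
  case (Cons z p)
  show ?case
  proof (cases q)
    case Nil
    have "last (z#p) \<in> set (z#p)" by simp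
    then show ?thesis using Cons.prems Nil by auto
  next
    case (Cons w q')
    have A: "(y,z) \<in> A" "(y,w) \<in> A" "(y,x) \<in> A"
      using Cons.prems \<open>q = w # q'\<close> sym by (auto simp: path_arcs_Cons2)
    have ne: "x \<noteq> z" "x \<noteq> w" using Cons.prems \<open>q = w # q'\<close> by auto
    obtain a b where ab: "\<forall>v. (y,v)\<in>A \<longrightarrow> v=a \<or> v=b" using nb by blast
    have zw: "z = w" using ab A ne by metis
    have "p = q'"
      using Cons.IH[of y z q'] Cons.prems \<open>q = w # q'\<close> zw by (auto simp: path_arcs_Cons2)
    then show ?thesis using \<open>q = w # q'\<close> zw by simp
  qed
qed

lemma route_shape:
  assumes "is_route E o' d r" "o' \<noteq> d"
  shows "\<exists>y r'. r = o' # y # r'"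
proof (cases r)
  case Nil then show ?thesis using assms by (simp add: is_route_def)
next
  case (Cons a r1)
  then have a: "a = o'" using assms by (simp add: is_route_def)
  show ?thesis
  proof (cases r1)
    case Nil then show ?thesis using assms Cons a by (simp add: is_route_def)
  next
    case (Cons b r2) then show ?thesis using \<open>r = a # r1\<close> a by blast
  qed
qed

lemma route_same2:
  assumes "is_cycle V E" "is_route E o' d (o'#y#p)" "is_route E o' d (o'#y#q)"
  shows "p = q"
  using path_unique[of "arcs_of E", OF cycle_nbrs[OF assms(1)] arcs_sym, of o' y p q] assms(2,3)
  by (auto simp: is_route_def)

lemma route3:
  assumes cyc: "is_cycle V E" and od: "o' \<noteq> d"
    and r: "is_route E o' d p" "is_route E o' d q" "is_route E o' d s"
  shows "p = q \<or> p = s \<or> q = s"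
proof -
  obtain a b where ab: "\<forall>v. (o',v) \<in> arcs_of E \<longrightarrow> v = a \<or> v = b" using cycle_nbrs[OF cyc] by blast
  have sec: "\<exists>r'. t = o' # a # r' \<or> t = o' # b # r'" if tr: "is_route E o' d t" for t
  proof -
    obtain y r' where t: "t = o' # y # r'" using route_shape[OF tr od] by blast
    then have "(o', y) \<in> arcs_of E" using tr by (auto simp: is_route_def path_arcs_Cons2)
    then show ?thesis using ab t by blast
  qed
  obtain p' where p': "p = o' # a # p' \<or> p = o' # b # p'" using sec r by blast
  obtain q' where q': "q = o' # a # q' \<or> q = o' # b # q'" using sec r by blast
  obtain s' where s': "s = o' # a # s' \<or> s = o' # b # s'" using sec r by blast
  show ?thesis using p' q' s' r route_same2[OF cyc] by metis
qed



lemma card2_cases: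
  assumes "finite S" "card S \<le> 2" "p \<in> S"
  shows "S = {p} \<or> (\<exists>s. s \<noteq> p \<and> S = {p, s})"
proof -
  have "card (S - {p}) \<le> 1" using assms by simp
  then have "S - {p} = {} \<or> (\<exists>s. S - {p} = {s})"
    by (metis card_0_eq card_1_singletonE finite_Diff assms(1) le_Suc_eq One_nat_def le_zero_eq)
  then show ?thesis using assms(3) by auto
qed

lemma abstract_core:
  fixes Rt :: "'r set" and ar :: "'r \<Rightarrow> 'a set" and z :: "'r \<Rightarrow> real"
  defines "D \<equiv> \<lambda>a. \<Sum>r\<in>{r\<in>Rt. a \<in> ar r}. z r"
  assumes fin: "finite Rt"
  and card2: "\<forall>a. card {r\<in>Rt. a \<in> ar r} \<le> 2"
  and pair: "\<forall>r\<in>Rt. z r \<noteq> 0 \<longrightarrow> (\<exists>p\<in>Rt. \<exists>q\<in>Rt. p \<noteq> q \<and> z p > 0 \<and> z q = - z p \<and> (r = p \<or> r = q) \<and>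
      ((\<forall>a\<in>ar p. D a \<ge> 0) \<and> (\<forall>b\<in>ar q. D b \<le> 0) \<longrightarrow> (\<forall>a\<in>ar p. D a = 0) \<and> (\<forall>b\<in>ar q. D b = 0)))"
  shows "D a = 0"
proof -
  define S where "S a = {r\<in>Rt. a \<in> ar r}" for a
  have finS: "finite (S a)" for a using fin by (simp add: S_def)
  have cS: "card (S a) \<le> 2" for a using card2 by (simp add: S_def)
  have DS: "D a = (\<Sum>r\<in>S a. z r)" for a by (simp add: D_def S_def)
  define N where "N r = card {s\<in>Rt. \<bar>z s\<bar> > \<bar>z r\<bar>}" for r
  have main: "\<forall>r\<in>Rt. N r = n \<longrightarrow> z r \<noteq> 0 \<longrightarrow> (\<forall>a\<in>ar r. \<exists>s\<in>Rt. s \<noteq> r \<and> a \<in> ar s \<and> z s = - z r)" for n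
  proof (induction n rule: less_induct)
    case (less n)
    show ?case
    proof (rule ballI, rule impI, rule impI)
      fix r assume r: "r \<in> Rt" "N r = n" "z r \<noteq> 0"
      have IH: "\<And>s a. s \<in> Rt \<Longrightarrow> \<bar>z s\<bar> > \<bar>z r\<bar> \<Longrightarrow> a \<in> ar s \<Longrightarrow> \<exists>t\<in>Rt. t \<noteq> s \<and> a \<in> ar t \<and> z t = - z s"
      proof -
        fix s a assume s: "s \<in> Rt" "\<bar>z s\<bar> > \<bar>z r\<bar>" "a \<in> ar s"
        have "{t\<in>Rt. \<bar>z t\<bar> > \<bar>z s\<bar>} \<subset> {t\<in>Rt. \<bar>z t\<bar> > \<bar>z r\<bar>}"
          using s by auto
        then have "N s < N r" unfolding N_def by (intro psubset_card_mono) (use fin in auto)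
        then show "\<exists>t\<in>Rt. t \<noteq> s \<and> a \<in> ar t \<and> z t = - z s"
          using less.IH[of "N s"] r s by auto
      qed
      from pair[rule_format, OF r(1) r(3)]
      obtain p q where pq: "p \<in> Rt" "q \<in> Rt" "p \<noteq> q" "z p > 0" "z q = - z p" "r = p \<or> r = q"
        and cond: "(\<forall>a\<in>ar p. D a \<ge> 0) \<and> (\<forall>b\<in>ar q. D b \<le> 0) \<longrightarrow> (\<forall>a\<in>ar p. D a = 0) \<and> (\<forall>b\<in>ar q. D b = 0)"
        by blast
      define m where "m = z p"
      have absr: "\<bar>z r\<bar> = m" using pq m_def by auto
      have noBig: "\<bar>z s\<bar> \<le> m" if "x \<in> S a" "\<bar>z x\<bar> = m" "s \<in> S a" for a x s
      proof (rule ccontr)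
        assume "\<not> \<bar>z s\<bar> \<le> m"
        then have big: "\<bar>z s\<bar> > \<bar>z r\<bar>" using absr by simp
        have sa: "s \<in> Rt" "a \<in> ar s" using that(3) by (auto simp: S_def)
        obtain t where t: "t \<in> Rt" "t \<noteq> s" "a \<in> ar t" "z t = - z s"
          using IH[OF sa(1) big sa(2)] by blast
        have "x \<noteq> s" "x \<noteq> t" using that t big absr by auto
        then have "{x, s, t} \<subseteq> S a" using that t by (auto simp: S_def)
        then have "card {x, s, t} \<le> card (S a)" using finS by (intro card_mono) auto
        moreover have "card {x, s, t} = 3" using \<open>x \<noteq> s\<close> \<open>x \<noteq> t\<close> t by auto
        ultimately show False using cS[of a] by simp
      qed
      have Dp: "D a \<ge> 0" if "a \<in> ar p" for a
      proof -
        have pS: "p \<in> S a" using that pq by (simp add: S_def)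
        from card2_cases[OF finS cS pS] show ?thesis
        proof
          assume "S a = {p}" then show ?thesis using DS pq by simp
        next
          assume "\<exists>s. s \<noteq> p \<and> S a = {p, s}"
          then obtain s where "s \<noteq> p" "S a = {p, s}" by blast
          moreover have "\<bar>z s\<bar> \<le> m" using noBig[OF pS] m_def pq \<open>S a = {p, s}\<close> by auto
          ultimately show ?thesis using DS m_def by auto
        qed
      qed
      have Dq: "D a \<le> 0" if "a \<in> ar q" for a
      proof -
        have pS: "q \<in> S a" using that pq by (simp add: S_def)
        from card2_cases[OF finS cS pS] show ?thesis
        proof
          assume "S a = {q}" then show ?thesis using DS pq by simp
        next
          assume "\<exists>s. s \<noteq> q \<and> S a = {q, s}"
          then obtain s where "s \<noteq> q" "S a = {q, s}" by blast
          moreover have "\<bar>z s\<bar> \<le> m" using noBig[OF pS] m_def pq \<open>S a = {q, s}\<close> by auto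
          ultimately show ?thesis using DS m_def pq by auto
        qed
      qed
      have D0: "\<forall>a\<in>ar p. D a = 0" "\<forall>b\<in>ar q. D b = 0" using cond Dp Dq by auto
      have gen: "\<exists>s\<in>Rt. s \<noteq> x \<and> a \<in> ar s \<and> z s = - z x"
        if "x \<in> Rt" "a \<in> ar x" "D a = 0" "z x \<noteq> 0" for x a
      proof -
        have xS: "x \<in> S a" using that by (simp add: S_def)
        from card2_cases[OF finS cS xS] show ?thesis
        proof
          assume "S a = {x}" then show ?thesis using DS that by simp
        next
          assume "\<exists>s. s \<noteq> x \<and> S a = {x, s}"
          then obtain s where "s \<noteq> x" "S a = {x, s}" by blast
          moreover have "s \<in> S a" using calculation by auto
          ultimately show ?thesis using DS that by (auto simp: S_def)
        qed
      qed
      show "\<forall>a\<in>ar r. \<exists>s\<in>Rt. s \<noteq> r \<and> a \<in> ar s \<and> z s = - z r"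
      proof
        fix a assume a: "a \<in> ar r"
        show "\<exists>s\<in>Rt. s \<noteq> r \<and> a \<in> ar s \<and> z s = - z r"
        proof (cases "r = p")
          case True then show ?thesis using gen[of r a] a D0 r by auto
        next
          case False then have "r = q" using pq by auto
          then show ?thesis using gen[of r a] a D0 r by auto
        qed
      qed
    qed
  qed
  show ?thesis
  proof (cases "\<forall>s\<in>S a. z s = 0")
    case True then show ?thesis using DS by simp
  next
    case False
    then obtain s where s: "s \<in> S a" "z s \<noteq> 0" by auto
    then obtain t where t: "t \<in> Rt" "t \<noteq> s" "a \<in> ar t" "z t = - z s"
      using main[of "N s"] by (auto simp: S_def)
    have "t \<in> S a" using t by (simp add: S_def)
    with card2_cases[OF finS cS s(1)] t have "S a = {s, t}" by auto
    then show ?thesis using DS t by simp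
  qed
qed



lemma three_finite:
  assumes "\<forall>x\<in>S. \<forall>y\<in>S. \<forall>w\<in>S. x = y \<or> x = w \<or> y = w"
  shows "finite S"
proof (rule ccontr)
  assume "infinite S"
  then obtain B where "finite B" "card B = 3" "B \<subseteq> S" using infinite_arbitrarily_large by blast
  then obtain x y w where "B = {x,y,w}" "x \<noteq> y" "y \<noteq> w" "x \<noteq> w" by (auto simp: card_3_iff)
  then show False using assms \<open>B \<subseteq> S\<close> by blast
qed

lemma smono_aux:
  fixes g :: "real \<Rightarrow> real"
  assumes "strict_mono_on {0..} g" "0 \<le> x" "0 \<le> y" "x \<le> y"
  shows "g x \<le> g y" "g x = g y \<Longrightarrow> x = y"
proof -
  show "g x \<le> g y"
  proof (cases "x = y")
    case False then have "x < y" using assms by simp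
    then show ?thesis using strict_mono_onD[OF assms(1)] assms by fastforce
  qed simp
  show "x = y" if "g x = g y"
  proof (rule ccontr)
    assume "x \<noteq> y" then have "x < y" using assms by simp
    then have "g x < g y" using strict_mono_onD[OF assms(1)] assms by fastforce
    then show False using that by simp
  qed
qed

lemma route_hd_last: "is_route E o' d r \<Longrightarrow> hd r = o' \<and> last r = d"
  by (simp add: is_route_def)

lemma route_arcs: "is_route E o' d r \<Longrightarrow> path_arcs r \<subseteq> arcs_of E"
  by (simp add: is_route_def)

lemma finite_path_arcs: "finite (path_arcs r)"
  by (simp add: path_arcs_def)

theorem proposition1:
  fixes V T :: "'v set" and E :: "'v set set" and L :: "('v \<times> 'v) set" and I :: "real set"
  assumes "is_cycle V E"
    and "demand_digraph V T L"
    and "population I"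
    and "\<forall>a \<in> arcs_of E. card {r \<in> all_routes E L. a \<in> path_arcs r} \<le> 2"
  shows "uniqueness_property E L I"
  unfolding uniqueness_property_def
proof (intro allI impI ballI)
  fix P c \<sigma>1 \<sigma>2 a0
  assume part: "od_partition I L P" and adm: "admissible_costs E I c"
    and eq1: "equilibrium E L I P c \<sigma>1" and eq2: "equilibrium E L I P c \<sigma>2"
    and a0: "a0 \<in> arcs_of E"
  note cyc = assms(1)
  have bI: "bounded I" using assms(3) by (simp add: population_def)
  obtain vs where vs: "set vs = V" using cyc unfolding is_cycle_def by blast
  have finV: "finite V" using vs by auto
  have LT: "L \<subseteq> T \<times> T" "T \<subseteq> V" and Lod: "\<forall>(o', d) \<in> L. o' \<noteq> d"
    using assms(2) by (auto simp: demand_digraph_def)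
  have finL: "finite L" using LT finV by (meson finite_SigmaI finite_subset)
  define Rt where "Rt = all_routes E L"
  have Rt_eq: "Rt = (\<Union>od\<in>L. {p. is_route E (fst od) (snd od) p})"
    by (auto simp: Rt_def all_routes_def)
  have finRt: "finite Rt"
    unfolding Rt_eq
  proof (intro finite_UN_I finL)
    fix od assume "od \<in> L"
    then have "fst od \<noteq> snd od" using Lod by auto
    then show "finite {p. is_route E (fst od) (snd od) p}"
      using route3[OF cyc] three_finite by (metis (mono_tags, lifting) mem_Collect_eq)
  qed
  have sp1: "strategy_profile E L I P \<sigma>1" and sp2: "strategy_profile E L I P \<sigma>2"
    using eq1 eq2 by (auto simp: equilibrium_def)
  have PI: "P od \<subseteq> I" if "od \<in> L" for od using part that by (auto simp: od_partition_def)
  have Pmeas: "P od \<in> sets lebesgue" if "od \<in> L" for od using part that by (auto simp: od_partition_def)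
  have Pdisj: "P od \<inter> P od' = {}" if "od \<in> L" "od' \<in> L" "od \<noteq> od'" for od od'
    using part that by (auto simp: od_partition_def)
  have Icov: "\<exists>od\<in>L. i \<in> P od" if "i \<in> I" for i using part that by (auto simp: od_partition_def)
  have spr: "is_route E o' d (\<sigma> i)" if "strategy_profile E L I P \<sigma>" "(o', d) \<in> L" "i \<in> P (o', d)" for \<sigma> o' d i
    using that by (auto simp: strategy_profile_def)
  have inRt: "\<sigma> i \<in> Rt" if sp: "strategy_profile E L I P \<sigma>" and iI: "i \<in> I" for \<sigma> i
  proof -
    obtain od where "od \<in> L" "i \<in> P od" using Icov iI by blast
    then show ?thesis using spr[OF sp, of "fst od" "snd od" i] by (auto simp: Rt_def all_routes_def)
  qed
  have Ameas: "{i\<in>I. \<sigma> i = r} \<in> lmeasurable" if "strategy_profile E L I P \<sigma>" for \<sigma> r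
    using that bI by (intro bounded_set_imp_lmeasurable) (auto simp: strategy_profile_def intro: bounded_subset)
  have flow_sum: "flow I \<sigma> a = (\<Sum>r\<in>{r\<in>Rt. a \<in> path_arcs r}. measure lebesgue {i\<in>I. \<sigma> i = r})"
    if sp: "strategy_profile E L I P \<sigma>" for \<sigma> a
  proof -
    have fin_em: "emeasure lebesgue {i\<in>I. \<sigma> i = r} \<noteq> \<infinity>" for r
      using fmeasurableD2[OF Ameas[OF sp]] unfolding infinity_ennreal_def by blast
    have "{i\<in>I. a \<in> path_arcs (\<sigma> i)} = (\<Union>r\<in>{r\<in>Rt. a \<in> path_arcs r}. {i\<in>I. \<sigma> i = r})"
      using inRt[OF sp] by auto
    moreover have "measure lebesgue (\<Union>r\<in>{r\<in>Rt. a \<in> path_arcs r}. {i\<in>I. \<sigma> i = r}) =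
        (\<Sum>r\<in>{r\<in>Rt. a \<in> path_arcs r}. measure lebesgue {i\<in>I. \<sigma> i = r})"
      by (rule measure_finite_Union; (rule fin_em | use finRt Ameas[OF sp] in \<open>auto simp: disjoint_family_on_def\<close>))
    ultimately show ?thesis unfolding flow_def by simp
  qed

  have Pclass: "i \<in> P (o', d)"
    if sp: "strategy_profile E L I P \<sigma>" and od: "(o', d) \<in> L" and iI: "i \<in> I"
      and rt: "is_route E o' d (\<sigma> i)" for \<sigma> o' d i
  proof -
    obtain od' where od': "od' \<in> L" "i \<in> P od'" using Icov iI by blast
    have "is_route E (fst od') (snd od') (\<sigma> i)" using spr[OF sp, of "fst od'" "snd od'" i] od' by auto
    then have "od' = (o', d)" using rt route_hd_last by (metis prod.collapse)
    then show ?thesis using od' by simp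
  qed
  have Psum: "measure lebesgue (P (o', d)) = (\<Sum>p\<in>{p. is_route E o' d p}. measure lebesgue {i\<in>I. \<sigma> i = p})"
    if sp: "strategy_profile E L I P \<sigma>" and od: "(o', d) \<in> L" for \<sigma> o' d
  proof -
    have RR: "{p. is_route E o' d p} \<subseteq> Rt" using od by (auto simp: Rt_def all_routes_def)
    have eq: "P (o', d) = (\<Union>p\<in>{p. is_route E o' d p}. {i\<in>I. \<sigma> i = p})"
      using spr[OF sp od] PI[OF od] Pclass[OF sp od] by auto
    have fin_em: "emeasure lebesgue {i\<in>I. \<sigma> i = r} \<noteq> \<infinity>" for r
      using fmeasurableD2[OF Ameas[OF sp]] unfolding infinity_ennreal_def by blast
    show ?thesis unfolding eq
      by (rule measure_finite_Union; (rule fin_em | use Ameas[OF sp] finite_subset[OF RR finRt] in \<open>auto simp: disjoint_family_on_def\<close>))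
  qed
  define n1 where "n1 r = measure lebesgue {i\<in>I. \<sigma>1 i = r}" for r
  define n2 where "n2 r = measure lebesgue {i\<in>I. \<sigma>2 i = r}" for r
  define z where "z r = n1 r - n2 r" for r
  define D where "D a = (\<Sum>r\<in>{r\<in>Rt. a \<in> path_arcs r}. z r)" for a
  have D_eq: "D a = flow I \<sigma>1 a - flow I \<sigma>2 a" for a
    unfolding D_def z_def n1_def n2_def flow_sum[OF sp1] flow_sum[OF sp2] by (simp add: sum_subtractf)
  have card2: "\<forall>a. card {r\<in>Rt. a \<in> path_arcs r} \<le> 2"
  proof
    fix a show "card {r\<in>Rt. a \<in> path_arcs r} \<le> 2"
    proof (cases "a \<in> arcs_of E")
      case True then show ?thesis using assms(4) Rt_def by simp
    next
      case False then have "{r\<in>Rt. a \<in> path_arcs r} = {}"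
        using route_arcs by (fastforce simp: Rt_def all_routes_def)
      then show ?thesis by (metis card.empty le0)
    qed
  qed
  have pair: "\<forall>r\<in>Rt. z r \<noteq> 0 \<longrightarrow> (\<exists>p\<in>Rt. \<exists>q\<in>Rt. p \<noteq> q \<and> z p > 0 \<and> z q = - z p \<and> (r = p \<or> r = q) \<and>
      ((\<forall>a\<in>path_arcs p. D a \<ge> 0) \<and> (\<forall>b\<in>path_arcs q. D b \<le> 0) \<longrightarrow> (\<forall>a\<in>path_arcs p. D a = 0) \<and> (\<forall>b\<in>path_arcs q. D b = 0)))"
  proof (intro ballI impI)
    fix r assume r: "r \<in> Rt" "z r \<noteq> 0"
    obtain o' d where od: "(o', d) \<in> L" "is_route E o' d r" using r(1) by (auto simp: Rt_def all_routes_def)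
    have ne: "o' \<noteq> d" using od Lod by auto
    have RR: "{p. is_route E o' d p} \<subseteq> Rt" using od by (auto simp: Rt_def all_routes_def)
    have S1: "measure lebesgue (P (o', d)) = (\<Sum>p\<in>{p. is_route E o' d p}. n1 p)"
      using Psum[OF sp1 od(1)] by (simp add: n1_def)
    have S2: "measure lebesgue (P (o', d)) = (\<Sum>p\<in>{p. is_route E o' d p}. n2 p)"
      using Psum[OF sp2 od(1)] by (simp add: n2_def)
    have "\<exists>r'. is_route E o' d r' \<and> r' \<noteq> r"
    proof (rule ccontr)
      assume "\<not> ?thesis"
      then have "{p. is_route E o' d p} = {r}" using od(2) by blast
      then have "n1 r = n2 r" using S1 S2 by simp
      then show False using r(2) unfolding z_def by simp
    qed
    then obtain r' where r': "is_route E o' d r'" "r' \<noteq> r" by blast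
    have "p = r \<or> p = r'" if "is_route E o' d p" for p
      using route3[OF cyc ne that od(2) r'(1)] r'(2) by blast
    then have Req: "{p. is_route E o' d p} = {r, r'}"
      using od(2) r'(1) by blast
    have "n1 r + n1 r' = n2 r + n2 r'" using S1 S2 Req r' by simp
    then have zr': "z r' = - z r" by (simp add: z_def)
    have r'Rt: "r' \<in> Rt" using RR r' by auto
    have cond: "(\<forall>a\<in>path_arcs p. D a \<ge> 0) \<and> (\<forall>b\<in>path_arcs q. D b \<le> 0) \<longrightarrow>
        (\<forall>a\<in>path_arcs p. D a = 0) \<and> (\<forall>b\<in>path_arcs q. D b = 0)"
      if pq: "{p. is_route E o' d p} = {p, q}" "p \<noteq> q" "z p > 0" for p q
    proof (intro impI)
      assume DD: "(\<forall>a\<in>path_arcs p. D a \<ge> 0) \<and> (\<forall>b\<in>path_arcs q. D b \<le> 0)"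
      have pR: "is_route E o' d p" and qR: "is_route E o' d q" using pq(1) by blast+
      have "\<exists>i\<in>I. \<sigma>1 i = p \<and> \<sigma>2 i \<noteq> p"
      proof (rule ccontr)
        assume "\<not> ?thesis"
        then have "{i\<in>I. \<sigma>1 i = p} \<subseteq> {i\<in>I. \<sigma>2 i = p}" by auto
        then have "n1 p \<le> n2 p" unfolding n1_def n2_def
          by (intro measure_mono_fmeasurable) (use Ameas[OF sp1] Ameas[OF sp2] in auto)
        then show False using pq(3) z_def by simp
      qed
      then obtain i where i: "i \<in> I" "\<sigma>1 i = p" "\<sigma>2 i \<noteq> p" by blast
      have iP: "i \<in> P (o', d)" using Pclass[OF sp1 od(1) i(1)] pR i(2) by simp
      have "is_route E o' d (\<sigma>2 i)" using spr[OF sp2 od(1) iP] .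
      then have i2: "\<sigma>2 i = q" using pq(1) i(3) by blast
      from eq1 have "\<forall>(o', d)\<in>L. \<forall>i\<in>P (o', d). \<forall>r. is_route E o' d r \<longrightarrow>
        route_cost c I \<sigma>1 i (\<sigma>1 i) \<le> route_cost c I \<sigma>1 i r" by (simp add: equilibrium_def)
      then have c1: "route_cost c I \<sigma>1 i p \<le> route_cost c I \<sigma>1 i q" using od(1) iP qR i(2) by fastforce
      from eq2 have "\<forall>(o', d)\<in>L. \<forall>i\<in>P (o', d). \<forall>r. is_route E o' d r \<longrightarrow>
        route_cost c I \<sigma>2 i (\<sigma>2 i) \<le> route_cost c I \<sigma>2 i r" by (simp add: equilibrium_def)
      then have c2: "route_cost c I \<sigma>2 i q \<le> route_cost c I \<sigma>2 i p" using od(1) iP pR i2 by fastforce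
      define f1 where "f1 = flow I \<sigma>1"
      define f2 where "f2 = flow I \<sigma>2"
      define \<delta> where "\<delta> a = c i a (f1 a) - c i a (f2 a)" for a
      have fnn: "f1 a \<ge> 0" "f2 a \<ge> 0" for a by (simp_all add: f1_def f2_def flow_def)
      have sm: "strict_mono_on {0..} (c i a)" if "a \<in> arcs_of E" for a
        using adm i(1) that by (simp add: admissible_costs_def)
      have pa: "path_arcs p \<subseteq> arcs_of E" "path_arcs q \<subseteq> arcs_of E" using route_arcs[OF pR] route_arcs[OF qR] by auto
      have dp: "\<delta> a \<ge> 0 \<and> (\<delta> a = 0 \<longrightarrow> D a = 0)" if "a \<in> path_arcs p" for a
      proof -
        have "D a \<ge> 0" using DD that by blast
        then have le: "f2 a \<le> f1 a" using D_eq[of a] unfolding f1_def f2_def by linarith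
        have s: "strict_mono_on {0..} (c i a)" using sm pa that by blast
        show ?thesis using smono_aux[OF s fnn(2) fnn(1) le] D_eq[of a] unfolding f1_def f2_def \<delta>_def by auto
      qed
      have dq: "\<delta> a \<le> 0 \<and> (\<delta> a = 0 \<longrightarrow> D a = 0)" if "a \<in> path_arcs q" for a
      proof -
        have "D a \<le> 0" using DD that by blast
        then have le: "f1 a \<le> f2 a" using D_eq[of a] unfolding f1_def f2_def by linarith
        have s: "strict_mono_on {0..} (c i a)" using sm pa that by blast
        show ?thesis using smono_aux[OF s fnn(1) fnn(2) le] D_eq[of a] unfolding f1_def f2_def \<delta>_def by auto
      qed
      have sumi: "(\<Sum>a\<in>path_arcs p. \<delta> a) \<le> (\<Sum>a\<in>path_arcs q. \<delta> a)"
        using c1 c2 unfolding route_cost_def \<delta>_def f1_def f2_def sum_subtractf by linarith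
      have nnp: "0 \<le> \<delta> a" if "a \<in> path_arcs p" for a using dp[OF that] by linarith
      have nnq: "0 \<le> - \<delta> a" if "a \<in> path_arcs q" for a using dq[OF that] by linarith
      have sp0: "(\<Sum>a\<in>path_arcs p. \<delta> a) \<ge> 0" using nnp by (rule sum_nonneg)
      have sq0: "(\<Sum>a\<in>path_arcs q. - \<delta> a) \<ge> 0" using nnq by (rule sum_nonneg)
      have "(\<Sum>a\<in>path_arcs q. - \<delta> a) = - (\<Sum>a\<in>path_arcs q. \<delta> a)" by (rule sum_negf)
      then have e1: "(\<Sum>a\<in>path_arcs p. \<delta> a) = 0" and e2: "(\<Sum>a\<in>path_arcs q. - \<delta> a) = 0"
        using sumi sp0 sq0 by linarith+
      have z1: "\<forall>a\<in>path_arcs p. \<delta> a = 0"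
        using e1 sum_nonneg_eq_0_iff[OF finite_path_arcs[of p], of \<delta>, OF nnp] by simp
      have z2: "\<forall>a\<in>path_arcs q. - \<delta> a = 0"
        using e2 sum_nonneg_eq_0_iff[OF finite_path_arcs[of q], of "\<lambda>a. - \<delta> a", OF nnq] by simp
      show "(\<forall>a\<in>path_arcs p. D a = 0) \<and> (\<forall>b\<in>path_arcs q. D b = 0)"
      proof (intro conjI ballI)
        fix a assume a: "a \<in> path_arcs p"
        show "D a = 0" using dp[OF a] z1 a by simp
      next
        fix b assume b: "b \<in> path_arcs q"
        have "\<delta> b = 0" using z2 b by simp
        then show "D b = 0" using dq[OF b] by simp
      qed
    qed
    show "\<exists>p\<in>Rt. \<exists>q\<in>Rt. p \<noteq> q \<and> z p > 0 \<and> z q = - z p \<and> (r = p \<or> r = q) \<and>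
      ((\<forall>a\<in>path_arcs p. D a \<ge> 0) \<and> (\<forall>b\<in>path_arcs q. D b \<le> 0) \<longrightarrow> (\<forall>a\<in>path_arcs p. D a = 0) \<and> (\<forall>b\<in>path_arcs q. D b = 0))"
    proof (cases "z r > 0")
      case True
      note c = cond[OF Req not_sym[OF r'(2)] True]
      have "r \<noteq> r' \<and> z r > 0 \<and> z r' = - z r \<and> (r = r \<or> r = r') \<and>
        ((\<forall>a\<in>path_arcs r. D a \<ge> 0) \<and> (\<forall>b\<in>path_arcs r'. D b \<le> 0) \<longrightarrow> (\<forall>a\<in>path_arcs r. D a = 0) \<and> (\<forall>b\<in>path_arcs r'. D b = 0))"
        using c r'(2) True zr' by blast
      then show ?thesis using r(1) r'Rt by (intro bexI[of _ r] bexI[of _ r'])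
    next
      case False
      then have zp: "z r' > 0" using r(2) zr' by simp
      have Req': "{p. is_route E o' d p} = {r', r}" using Req by auto
      note c = cond[OF Req' r'(2) zp]
      have zr2: "z r = - z r'" using zr' by simp
      have "r' \<noteq> r \<and> z r' > 0 \<and> z r = - z r' \<and> (r = r' \<or> r = r) \<and>
        ((\<forall>a\<in>path_arcs r'. D a \<ge> 0) \<and> (\<forall>b\<in>path_arcs r. D b \<le> 0) \<longrightarrow> (\<forall>a\<in>path_arcs r'. D a = 0) \<and> (\<forall>b\<in>path_arcs r. D b = 0))"
        using c r'(2) zp zr2 by blast
      then show ?thesis using r(1) r'Rt by (intro bexI[of _ r'] bexI[of _ r])
    qed
  qed
  have "D a0 = 0"
    unfolding D_def by (rule abstract_core[of Rt path_arcs z, OF finRt card2 pair[unfolded D_def]])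
  then show "flow I \<sigma>1 a0 = flow I \<sigma>2 a0" using D_eq by simp
qed

end
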